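(* Let $m \ge 2$ and $G=\mathbb{Z}^{m-1} \rtimes \mathbb{Z}/ 2\mathbb{Z}$, where $\mathbb{Z}/2\mathbb{Z}$ acts on $\mathbb{Z}^{m-1}$ by $v\mapsto -v$. In $\mathcal{M}_m$ there are exactly $2^m-1$ marked groups whose underlying group is isomorphic to $G$.
   Context: A marked group on $m$ generators is a pair $(H,S)$ with $S=(g_1,\dots,g_m)$ an ordered generating tuple of $H$; two marked groups $(H,S)$, $(H',S')$ are identified if there is an isomorphism $H\to H'$ mapping $g_i$ to $g_i'$ for all $i$. $\mathcal{M}_m$ denotes the set (space) of these equivalence classes. *)

theory Defs
  imports "HOL-Algebra.Algebra"
begin

text \<open>Elements: pairs (v, e) with v an integer vector of length m-1 (a list) and e :: bool
  representing Z/2Z (True = nontrivial element).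
  (v, a) * (w, b) = (v + a.w, a + b), where a.w = -w if a, w otherwise.\<close>

definition semidir_G :: "nat \<Rightarrow> (int list \<times> bool) monoid" where
  "semidir_G m = \<lparr> carrier = {(v, e). length v = m - 1},
     monoid.mult = (\<lambda>x y. (map2 (+) (fst x) (if snd x then map uminus (fst y) else fst y),
                      snd x \<noteq> snd y)),
     one = (replicate (m - 1) 0, False) \<rparr>"

definition marked_group :: "nat \<Rightarrow> 'a monoid \<Rightarrow> 'a list \<Rightarrow> bool" where
  "marked_group m H S \<longleftrightarrow> group H \<and> length S = m \<and> set S \<subseteq> carrier H
     \<and> generate H (set S) = carrier H"

definition marked_equiv :: "(('a monoid \<times> 'a list) \<times> ('a monoid \<times> 'a list)) set" where
  "marked_equiv = {((H, S), (H', S')). \<exists>\<phi>. \<phi> \<in> iso H H' \<and> map \<phi> S = S'}"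

definition marked_groups_iso_to :: "nat \<Rightarrow> ('b, 'c) monoid_scheme \<Rightarrow> ('a monoid \<times> 'a list) set" where
  "marked_groups_iso_to m K = {(H, S). marked_group m H S \<and> H \<cong> K}"

end

theory Submission
  imports Defs "Jordan_Normal_Form.Determinant"
begin

lemma G_carrier: "carrier (semidir_G m) = {(v, e). length v = m - 1}"
  by (simp add: semidir_G_def)
lemma G_mult: "x \<otimes>\<^bsub>semidir_G m\<^esub> y = (map2 (+) (fst x) (if snd x then map uminus (fst y) else fst y), snd x \<noteq> snd y)"
  by (simp add: semidir_G_def)
lemma G_one: "\<one>\<^bsub>semidir_G m\<^esub> = (replicate (m - 1) 0, False)"
  by (simp add: semidir_G_def)

lemma G_group: "group (semidir_G m)"
proof (rule groupI)
  fix x y z assume "x \<in> carrier (semidir_G m)" "y \<in> carrier (semidir_G m)" "z \<in> carrier (semidir_G m)"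
  then show "x \<otimes>\<^bsub>semidir_G m\<^esub> y \<otimes>\<^bsub>semidir_G m\<^esub> z = x \<otimes>\<^bsub>semidir_G m\<^esub> (y \<otimes>\<^bsub>semidir_G m\<^esub> z)"
    by (cases x; cases y; cases z) (auto simp: G_carrier G_mult intro!: nth_equalityI)
next
  fix x y assume "x \<in> carrier (semidir_G m)" "y \<in> carrier (semidir_G m)"
  then show "x \<otimes>\<^bsub>semidir_G m\<^esub> y \<in> carrier (semidir_G m)"
    by (auto simp: G_carrier G_mult)
next
  show "\<one>\<^bsub>semidir_G m\<^esub> \<in> carrier (semidir_G m)" by (simp add: G_carrier G_one)
next
  fix x assume "x \<in> carrier (semidir_G m)"
  then show "\<one>\<^bsub>semidir_G m\<^esub> \<otimes>\<^bsub>semidir_G m\<^esub> x = x"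
    by (cases x) (auto simp: G_carrier G_mult G_one intro!: nth_equalityI)
next
  fix x assume "x \<in> carrier (semidir_G m)"
  then show "\<exists>y\<in>carrier (semidir_G m). y \<otimes>\<^bsub>semidir_G m\<^esub> x = \<one>\<^bsub>semidir_G m\<^esub>"
  proof (intro bexI)
    show "(if snd x then fst x else map uminus (fst x), snd x) \<otimes>\<^bsub>semidir_G m\<^esub> x = \<one>\<^bsub>semidir_G m\<^esub>"
      using \<open>x \<in> carrier (semidir_G m)\<close>
      by (cases x) (auto simp: G_carrier G_mult G_one intro!: nth_equalityI)
  qed (use \<open>x \<in> carrier (semidir_G m)\<close> in \<open>auto simp: G_carrier\<close>)
qed

definition invol :: "('b, 'c) monoid_scheme \<Rightarrow> 'b \<Rightarrow> bool" where
  "invol H x \<longleftrightarrow> x \<otimes>\<^bsub>H\<^esub> x = \<one>\<^bsub>H\<^esub> \<and> x \<noteq> \<one>\<^bsub>H\<^esub>"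

lemma G_invol: assumes "x \<in> carrier (semidir_G m)" shows "invol (semidir_G m) x \<longleftrightarrow> snd x"
proof (cases "snd x")
  case True
  then show ?thesis using assms
    by (cases x) (auto simp: invol_def G_carrier G_mult G_one intro!: nth_equalityI)
next
  case False
  obtain v where x: "x = (v, False)" "length v = m - 1" using assms False by (cases x) (auto simp: G_carrier)
  have "v = replicate (m - 1) 0" if "map2 (+) v v = replicate (m - 1) (0::int)"
  proof (rule nth_equalityI)
    fix i assume "i < length v"
    then have "(map2 (+) v v) ! i = 0" using that x by simp
    then show "v ! i = replicate (m - 1) 0 ! i" using \<open>i < length v\<close> x by simp
  qed (use x in simp)
  then show ?thesis using x by (auto simp: invol_def G_mult G_one)
qed

lemma G_inv: assumes "x \<in> carrier (semidir_G m)"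
  shows "inv\<^bsub>semidir_G m\<^esub> x = (if snd x then fst x else map uminus (fst x), snd x)"
proof (rule group.inv_equality[OF G_group])
  show "(if snd x then fst x else map uminus (fst x), snd x) \<otimes>\<^bsub>semidir_G m\<^esub> x = \<one>\<^bsub>semidir_G m\<^esub>"
    using assms by (cases x) (auto simp: G_carrier G_mult G_one intro!: nth_equalityI)
qed (use assms in \<open>auto simp: G_carrier\<close>)

lemma invol_iso:
  assumes "group H" "group K" "\<phi> \<in> iso H K" "x \<in> carrier H"
  shows "invol K (\<phi> x) \<longleftrightarrow> invol H x"
proof -
  have inj: "inj_on \<phi> (carrier H)" using assms(3) by (simp add: Group.iso_iff)
  interpret group_hom H K \<phi> using assms by (simp add: group_hom_def group_hom_axioms_def Group.iso_iff)
  have "\<phi> x \<otimes>\<^bsub>K\<^esub> \<phi> x = \<one>\<^bsub>K\<^esub> \<longleftrightarrow> x \<otimes>\<^bsub>H\<^esub> x = \<one>\<^bsub>H\<^esub>"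
    using assms(4) inj hom_mult[symmetric] hom_one[symmetric]
    by (metis G.m_closed G.one_closed inj_on_contraD)
  moreover have "\<phi> x = \<one>\<^bsub>K\<^esub> \<longleftrightarrow> x = \<one>\<^bsub>H\<^esub>"
    using assms(4) inj hom_one by (metis G.one_closed inj_on_contraD)
  ultimately show ?thesis by (simp add: invol_def)
qed

lemma gen_iso:
  assumes "group H" "group K" "\<phi> \<in> iso H K" "Y \<subseteq> carrier H" "generate H Y = carrier H"
  shows "generate K (\<phi> ` Y) = carrier K"
proof -
  have su: "\<phi> ` carrier H = carrier K" using assms(3) by (simp add: Group.iso_iff)
  interpret group_hom H K \<phi> using assms by (simp add: group_hom_def group_hom_axioms_def Group.iso_iff)
  show ?thesis using generate_img[OF assms(4)] su assms(5) by simp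
qed

lemma G_gen_has_true:
  assumes "Y \<subseteq> carrier (semidir_G m)" "generate (semidir_G m) Y = carrier (semidir_G m)"
  shows "\<exists>x\<in>Y. snd x"
proof (rule ccontr)
  assume neg: "\<not> (\<exists>x\<in>Y. snd x)"
  let ?F = "{x \<in> carrier (semidir_G m). \<not> snd x}"
  have sg: "subgroup ?F (semidir_G m)"
  proof (rule group.subgroupI[OF G_group])
    have "(replicate (m - 1) 0, False) \<in> ?F" by (simp add: G_carrier)
    then show "?F \<noteq> {}" by blast
  next
    fix a assume "a \<in> ?F" then show "inv\<^bsub>semidir_G m\<^esub> a \<in> ?F"
      by (auto simp: G_inv G_carrier)
  next
    fix a b assume "a \<in> ?F" "b \<in> ?F" then show "a \<otimes>\<^bsub>semidir_G m\<^esub> b \<in> ?F"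
      by (auto simp: G_mult G_carrier)
  qed auto
  have "Y \<subseteq> ?F" using assms(1) neg by auto
  then have "generate (semidir_G m) Y \<subseteq> ?F"
    using group.generate_subgroup_incl[OF G_group _ sg] by blast
  moreover have "(replicate (m - 1) 0, True) \<in> carrier (semidir_G m)" by (simp add: G_carrier)
  ultimately show False using assms(2) by auto
qed

definition amap :: "nat \<Rightarrow> int mat \<Rightarrow> int list \<Rightarrow> int list \<times> bool \<Rightarrow> int list \<times> bool" where
  "amap n C u x = (map (\<lambda>i. \<Sum>k<n. C $$ (i,k) * (fst x ! k - (if snd x then u ! k else 0))) [0..<n], snd x)"

definition bmap :: "nat \<Rightarrow> int mat \<Rightarrow> int list \<Rightarrow> int list \<times> bool \<Rightarrow> int list \<times> bool" where
  "bmap n B u x = (map (\<lambda>i. (\<Sum>k<n. B $$ (i,k) * fst x ! k) + (if snd x then u ! i else 0)) [0..<n], snd x)"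

lemma amap_nth: "k < n \<Longrightarrow> fst (amap n C u x) ! k = (\<Sum>l<n. C $$ (k,l) * (fst x ! l - (if snd x then u ! l else 0)))"
  by (simp add: amap_def)
lemma bmap_nth: "k < n \<Longrightarrow> fst (bmap n B u x) ! k = (\<Sum>l<n. B $$ (k,l) * fst x ! l) + (if snd x then u ! k else 0)"
  by (simp add: bmap_def)
lemma amap_len[simp]: "length (fst (amap n C u x)) = n" by (simp add: amap_def)
lemma bmap_len[simp]: "length (fst (bmap n C u x)) = n" by (simp add: bmap_def)
lemma amap_snd[simp]: "snd (amap n C u x) = snd x" by (simp add: amap_def)
lemma bmap_snd[simp]: "snd (bmap n C u x) = snd x" by (simp add: bmap_def)

lemma amap_hom: "amap (m - 1) C u \<in> hom (semidir_G m) (semidir_G m)"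
proof (rule homI)
  fix x assume "x \<in> carrier (semidir_G m)" then show "amap (m - 1) C u x \<in> carrier (semidir_G m)"
    by (simp add: amap_def G_carrier)
next
  fix x y assume xy: "x \<in> carrier (semidir_G m)" "y \<in> carrier (semidir_G m)"
  obtain a e b f where x: "x = (a,e)" and y: "y = (b,f)" by (cases x, cases y)
  have la: "length a = m - 1" and lb: "length b = m - 1" using xy x y by (auto simp: G_carrier)
  show "amap (m - 1) C u (x \<otimes>\<^bsub>semidir_G m\<^esub> y) = amap (m - 1) C u x \<otimes>\<^bsub>semidir_G m\<^esub> amap (m - 1) C u y"
  proof (rule prod_eqI)
    show "snd (amap (m - 1) C u (x \<otimes>\<^bsub>semidir_G m\<^esub> y)) = snd (amap (m - 1) C u x \<otimes>\<^bsub>semidir_G m\<^esub> amap (m - 1) C u y)"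
      by (simp add: G_mult)
    show "fst (amap (m - 1) C u (x \<otimes>\<^bsub>semidir_G m\<^esub> y)) = fst (amap (m - 1) C u x \<otimes>\<^bsub>semidir_G m\<^esub> amap (m - 1) C u y)"
    proof (rule nth_equalityI)
      show "length (fst (amap (m - 1) C u (x \<otimes>\<^bsub>semidir_G m\<^esub> y))) = length (fst (amap (m - 1) C u x \<otimes>\<^bsub>semidir_G m\<^esub> amap (m - 1) C u y))"
        by (simp add: G_mult)
      fix i assume "i < length (fst (amap (m - 1) C u (x \<otimes>\<^bsub>semidir_G m\<^esub> y)))"
      then have i: "i < m - 1" by simp
      have L: "fst (amap (m - 1) C u (x \<otimes>\<^bsub>semidir_G m\<^esub> y)) ! i
          = (\<Sum>k<m-1. C $$ (i,k) * (a ! k + (if e then - (b ! k) else b ! k) - (if e \<noteq> f then u ! k else 0)))"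
        using i la lb unfolding x y by (simp add: amap_nth G_mult)
      have R: "fst (amap (m - 1) C u x \<otimes>\<^bsub>semidir_G m\<^esub> amap (m - 1) C u y) ! i
          = (\<Sum>k<m-1. C $$ (i,k) * (a ! k - (if e then u ! k else 0))) +
            (if e then - (\<Sum>k<m-1. C $$ (i,k) * (b ! k - (if f then u ! k else 0)))
             else (\<Sum>k<m-1. C $$ (i,k) * (b ! k - (if f then u ! k else 0))))"
        using i unfolding x y by (simp add: amap_nth G_mult)
      show "fst (amap (m - 1) C u (x \<otimes>\<^bsub>semidir_G m\<^esub> y)) ! i = fst (amap (m - 1) C u x \<otimes>\<^bsub>semidir_G m\<^esub> amap (m - 1) C u y) ! i"
        unfolding L R
        by (cases e; cases f; simp only: if_True if_False simp_thms sum_negf[symmetric] sum.distrib[symmetric];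
            intro sum.cong refl; simp add: algebra_simps)
    qed
  qed
qed

lemma matprod_apply:
  assumes "(C :: int mat) \<in> carrier_mat n n" "B \<in> carrier_mat n n" "C * B = 1\<^sub>m n" "i < n"
  shows "(\<Sum>k<n. C $$ (i,k) * (\<Sum>l<n. B $$ (k,l) * a l)) = a i"
proof -
  have "(\<Sum>k<n. C $$ (i,k) * (\<Sum>l<n. B $$ (k,l) * a l)) = (\<Sum>l<n. (\<Sum>k<n. C $$ (i,k) * B $$ (k,l)) * a l)"
    by (simp add: sum_distrib_left sum_distrib_right mult.assoc) (rule sum.swap)
  also have "\<dots> = (\<Sum>l<n. (if i = l then 1 else 0) * a l)"
  proof (rule sum.cong[OF refl])
    fix l assume "l \<in> {..<n}"
    then have h1: "(\<Sum>k<n. C $$ (i,k) * B $$ (k,l)) = (C * B) $$ (i,l)"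
      using assms(1,2,4) by (simp add: index_mult_mat scalar_prod_def lessThan_atLeast0)
    have h2: "(C * B) $$ (i,l) = (if i = l then 1 else 0)"
      unfolding assms(3) using assms \<open>l \<in> {..<n}\<close> by simp
    show "(\<Sum>k<n. C $$ (i,k) * B $$ (k,l)) * a l = (if i = l then 1 else 0) * a l"
      unfolding h1 h2 ..
  qed
  also have "\<dots> = (\<Sum>l<n. if i = l then a l else 0)" by (rule sum.cong) auto
  also have "\<dots> = a i" using assms(4) by simp
  finally show ?thesis .
qed

lemma amap_iso:
  assumes "C \<in> carrier_mat (m - 1) (m - 1)" "B \<in> carrier_mat (m - 1) (m - 1)"
    "C * B = 1\<^sub>m (m - 1)" "B * C = 1\<^sub>m (m - 1)" "length u = m - 1"
  shows "amap (m - 1) C u \<in> iso (semidir_G m) (semidir_G m)"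
proof (rule isoI[OF amap_hom], rule bij_betwI[where g="bmap (m - 1) B u"])
  show "amap (m - 1) C u \<in> carrier (semidir_G m) \<rightarrow> carrier (semidir_G m)"
    by (auto simp add: amap_def G_carrier)
  show "bmap (m - 1) B u \<in> carrier (semidir_G m) \<rightarrow> carrier (semidir_G m)"
    by (auto simp add: bmap_def G_carrier)
next
  fix x assume "x \<in> carrier (semidir_G m)"
  then obtain a e where x: "x = (a,e)" "length a = m - 1" by (auto simp: G_carrier)
  show "bmap (m - 1) B u (amap (m - 1) C u x) = x"
  proof (rule prod_eqI)
    show "fst (bmap (m - 1) B u (amap (m - 1) C u x)) = fst x"
    proof (rule nth_equalityI)
      fix i assume "i < length (fst (bmap (m - 1) B u (amap (m - 1) C u x)))"
      then have i: "i < m - 1" by simp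
      have "fst (bmap (m - 1) B u (amap (m - 1) C u x)) ! i
         = (\<Sum>l<m-1. B $$ (i,l) * (\<Sum>k<m-1. C $$ (l,k) * (a ! k - (if e then u ! k else 0)))) + (if e then u ! i else 0)"
        using i x by (simp add: bmap_nth amap_nth)
      also have "\<dots> = a ! i" using matprod_apply[OF assms(2,1,4) i, of "\<lambda>l. a ! l - (if e then u ! l else 0)"] by simp
      finally show "fst (bmap (m - 1) B u (amap (m - 1) C u x)) ! i = fst x ! i" using x by simp
    qed (use x in simp)
  qed (use x in simp)
next
  fix x assume "x \<in> carrier (semidir_G m)"
  then obtain a e where x: "x = (a,e)" "length a = m - 1" by (auto simp: G_carrier)
  show "amap (m - 1) C u (bmap (m - 1) B u x) = x"
  proof (rule prod_eqI)
    show "fst (amap (m - 1) C u (bmap (m - 1) B u x)) = fst x"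
    proof (rule nth_equalityI)
      fix i assume "i < length (fst (amap (m - 1) C u (bmap (m - 1) B u x)))"
      then have i: "i < m - 1" by simp
      have "fst (amap (m - 1) C u (bmap (m - 1) B u x)) ! i
         = (\<Sum>l<m-1. C $$ (i,l) * (fst (bmap (m - 1) B u x) ! l - (if e then u ! l else 0)))"
        using i x by (simp add: amap_nth)
      also have "\<dots> = (\<Sum>l<m-1. C $$ (i,l) * (\<Sum>k<m-1. B $$ (l,k) * a ! k))"
        using x by (intro sum.cong refl) (simp add: bmap_nth)
      also have "\<dots> = a ! i" using matprod_apply[OF assms(1,2,3) i, of "\<lambda>l. a ! l"] by simp
      finally show "fst (amap (m - 1) C u (bmap (m - 1) B u x)) ! i = fst x ! i" using x by simp
    qed (use x in simp)
  qed (use x in simp)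
qed

lemma int_inv_comm:
  assumes "(B :: int mat) \<in> carrier_mat n n" "C \<in> carrier_mat n n" "B * C = 1\<^sub>m n"
  shows "C * B = 1\<^sub>m n"
proof -
  let ?h = "map_mat (of_int :: int \<Rightarrow> rat)"
  have "?h B * ?h C = ?h (B * C)"
    by (rule of_int_hom.mat_hom_mult[OF assms(1,2), symmetric])
  also have "?h (B * C) = 1\<^sub>m n" unfolding assms(3) by (rule of_int_hom.mat_hom_one)
  finally have "?h B * ?h C = 1\<^sub>m n" .
  then have "?h C * ?h B = 1\<^sub>m n"
    by (rule mat_mult_left_right_inverse[rotated 2]) (use assms in auto)
  then have eq: "?h (C * B) = ?h (1\<^sub>m n)"
    unfolding of_int_hom.mat_hom_mult[OF assms(2,1)] of_int_hom.mat_hom_one .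
  show ?thesis
  proof (rule eq_matI)
    fix i j assume ij: "i < dim_row (1\<^sub>m n :: int mat)" "j < dim_col (1\<^sub>m n :: int mat)"
    have "?h (C * B) $$ (i,j) = ?h (1\<^sub>m n) $$ (i,j)" using eq by simp
    then have "rat_of_int ((C * B) $$ (i,j)) = rat_of_int ((1\<^sub>m n) $$ (i,j))"
      using ij assms by (simp only: index_map_mat dim_row_mat dim_col_mat index_one_mat) (simp add: carrier_matD)
    then show "(C * B) $$ (i,j) = (1\<^sub>m n) $$ (i,j)" by (simp only: of_int_eq_iff)
  qed (use assms in auto)
qed

definition unitl :: "nat \<Rightarrow> nat \<Rightarrow> int list" where
  "unitl n k = map (\<lambda>i. if i = k then 1 else 0) [0..<n]"
definition scal :: "nat \<Rightarrow> nat \<Rightarrow> int \<Rightarrow> int list" where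
  "scal n k c = map (\<lambda>i. if i = k then c else 0) [0..<n]"
definition trunc :: "nat \<Rightarrow> nat \<Rightarrow> int list \<Rightarrow> int list" where
  "trunc n t v = map (\<lambda>i. if i < t then v ! i else 0) [0..<n]"

lemma subgroup_full:
  assumes sg: "subgroup W (semidir_G m)"
    and z: "(replicate (m - 1) 0, True) \<in> W"
    and u: "\<And>k. k < m - 1 \<Longrightarrow> (unitl (m - 1) k, False) \<in> W"
  shows "W = carrier (semidir_G m)"
proof
  show "W \<subseteq> carrier (semidir_G m)" using sg by (rule subgroup.subset)
next
  let ?G = "semidir_G m"
  let ?n = "m - 1"
  have mc: "a \<otimes>\<^bsub>?G\<^esub> b \<in> W" if "a \<in> W" "b \<in> W" for a b using sg that by (rule subgroup.m_closed)
  have ic: "inv\<^bsub>?G\<^esub> a \<in> W" if "a \<in> W" for a using sg that by (rule subgroup.m_inv_closed)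
  have oc: "\<one>\<^bsub>?G\<^esub> \<in> W" using sg by (rule subgroup.one_closed)
  have sc: "(scal ?n k c, False) \<in> W" if k: "k < ?n" for k c
  proof (induction c rule: int_induct[where k=0])
    case base
    have "scal ?n k 0 = replicate ?n 0" by (auto simp: scal_def intro!: nth_equalityI)
    then show ?case using oc by (simp add: G_one)
  next
    case (step1 i)
    have "(scal ?n k i, False) \<otimes>\<^bsub>?G\<^esub> (unitl ?n k, False) = (scal ?n k (i + 1), False)"
      by (auto simp: G_mult scal_def unitl_def intro!: nth_equalityI)
    then show ?case using mc[OF step1(2) u[OF k]] by simp
  next
    case (step2 i)
    have "inv\<^bsub>?G\<^esub> (unitl ?n k, False) = (map uminus (unitl ?n k), False)"
      by (simp add: G_inv G_carrier unitl_def)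
    moreover have "(scal ?n k i, False) \<otimes>\<^bsub>?G\<^esub> (map uminus (unitl ?n k), False) = (scal ?n k (i - 1), False)"
      by (auto simp: G_mult scal_def unitl_def intro!: nth_equalityI)
    ultimately show ?case using mc[OF step2(2) ic[OF u[OF k]]] by simp
  qed
  have tr: "(trunc ?n t v, False) \<in> W" if "length v = ?n" "t \<le> ?n" for v t
    using that(2)
  proof (induction t)
    case 0
    have "trunc ?n 0 v = replicate ?n 0" by (auto simp: trunc_def intro!: nth_equalityI)
    then show ?case using oc by (simp add: G_one)
  next
    case (Suc t)
    have "(trunc ?n t v, False) \<otimes>\<^bsub>?G\<^esub> (scal ?n t (v ! t), False) = (trunc ?n (Suc t) v, False)"
      by (auto simp: G_mult scal_def trunc_def intro!: nth_equalityI)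
    moreover have "t < ?n" using Suc.prems by simp
    moreover have "(trunc ?n t v, False) \<in> W" using Suc by simp
    ultimately show ?case using mc sc by metis
  qed
  show "carrier ?G \<subseteq> W"
  proof
  fix x assume "x \<in> carrier ?G"
  then obtain v e where x: "x = (v, e)" "length v = ?n" by (auto simp: G_carrier)
  have vF: "(v, False) \<in> W"
  proof -
    have "trunc ?n ?n v = v" using x by (auto simp: trunc_def intro!: nth_equalityI)
    then show ?thesis using tr[OF x(2) order_refl] by simp
  qed
  show "x \<in> W"
  proof (cases e)
    case True
    have "(v, False) \<otimes>\<^bsub>?G\<^esub> (replicate ?n 0, True) = (v, True)"
      using x by (auto simp: G_mult intro!: nth_equalityI)
    then show ?thesis using mc[OF vF z] x True by simp
  qed (use vF x in simp)
  qed
qed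

definition fj :: "bool list \<Rightarrow> nat" where "fj p = (LEAST i. i < length p \<and> p ! i)"
definition idx :: "nat \<Rightarrow> nat \<Rightarrow> nat" where "idx j k = (if k < j then k else Suc k)"
definition pos :: "nat \<Rightarrow> nat \<Rightarrow> nat" where "pos j i = (if i < j then i else i - 1)"
definition S0 :: "bool list \<Rightarrow> (int list \<times> bool) list" where
  "S0 p = map (\<lambda>i. (if i = fj p then replicate (length p - 1) 0 else unitl (length p - 1) (pos (fj p) i), p ! i)) [0..<length p]"

lemma fj_props: assumes "True \<in> set p" shows "fj p < length p" "p ! fj p"
proof -
  obtain i where "i < length p \<and> p ! i" using assms by (auto simp: in_set_conv_nth)
  then have "fj p < length p \<and> p ! fj p" unfolding fj_def by (rule LeastI)
  then show "fj p < length p" "p ! fj p" by auto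
qed

lemma S0_len[simp]: "length (S0 p) = length p" by (simp add: S0_def)
lemma S0_snd: "map snd (S0 p) = p" by (auto simp: S0_def intro!: nth_equalityI)
lemma S0_carrier: "length p = m \<Longrightarrow> set (S0 p) \<subseteq> carrier (semidir_G m)"
  by (auto simp: S0_def G_carrier unitl_def)

lemma S0_gen:
  assumes "length p = m" "True \<in> set p"
  shows "generate (semidir_G m) (set (S0 p)) = carrier (semidir_G m)"
proof (rule subgroup_full)
  let ?G = "semidir_G m"
  let ?j = "fj p"
  have sg: "subgroup (generate ?G (set (S0 p))) ?G"
    using group.generate_is_subgroup[OF G_group S0_carrier[OF assms(1)]] .
  then show "subgroup (generate ?G (set (S0 p))) ?G" .
  have inS: "S0 p ! i \<in> generate ?G (set (S0 p))" if "i < m" for i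
    using that assms by (intro generate.incl nth_mem) simp
  have j: "?j < m" "p ! ?j" using fj_props[OF assms(2)] assms(1) by auto
  show z: "(replicate (m - 1) 0, True) \<in> generate ?G (set (S0 p))"
    using inS[OF j(1)] j assms(1) by (simp add: S0_def)
  fix k assume k: "k < m - 1"
  let ?i = "idx ?j k"
  have i: "?i < m" "?i \<noteq> ?j" "pos ?j ?i = k" using k j by (auto simp: idx_def pos_def)
  have Si: "S0 p ! ?i = (unitl (m - 1) k, p ! ?i)" using i assms(1) by (simp add: S0_def)
  show "(unitl (m - 1) k, False) \<in> generate ?G (set (S0 p))"
  proof (cases "p ! ?i")
    case True
    have "(unitl (m - 1) k, True) \<otimes>\<^bsub>?G\<^esub> (replicate (m - 1) 0, True) = (unitl (m - 1) k, False)"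
      by (auto simp: G_mult unitl_def intro!: nth_equalityI)
    then show ?thesis using subgroup.m_closed[OF sg inS[OF i(1)] z] Si True by simp
  qed (use inS[OF i(1)] Si in simp)
qed

lemma unitl_sum: assumes "k < n" shows "(\<Sum>q<n. f q * unitl n k ! q) = (f k :: int)"
proof -
  have "(\<Sum>q<n. f q * unitl n k ! q) = (\<Sum>q<n. if q = k then f q else 0)"
    by (rule sum.cong) (auto simp: unitl_def)
  then show ?thesis using assms by simp
qed

lemma one_sum: assumes "l < n" shows "(\<Sum>q<n. (1\<^sub>m n :: int mat) $$ (l,q) * a q) = a l"
proof -
  have "(\<Sum>q<n. (1\<^sub>m n :: int mat) $$ (l,q) * a q) = (\<Sum>q<n. if q = l then a q else 0)"
    using assms by (intro sum.cong) auto
  then show ?thesis using assms by simp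
qed

lemma L2:
  assumes mg: "marked_group m (semidir_G m) T"
  shows "\<exists>\<alpha> \<in> iso (semidir_G m) (semidir_G m). map \<alpha> T = S0 (map snd T)"
proof -
  let ?G = "semidir_G m"
  let ?n = "m - 1"
  define p where "p = map snd T"
  have lT: "length T = m" and sT: "set T \<subseteq> carrier ?G" and gT: "generate ?G (set T) = carrier ?G"
    using mg by (auto simp: marked_group_def)
  have lp: "length p = m" using lT by (simp add: p_def)
  have tp: "True \<in> set p" using G_gen_has_true[OF sT gT] by (force simp: p_def)
  define j where "j = fj p"
  have j: "j < m" "p ! j" using fj_props[OF tp] lp by (auto simp: j_def)
  have Tj: "snd (T ! j)" using j lT by (simp add: p_def)
  have Tc: "T ! i \<in> carrier ?G" if "i < m" for i using sT that lT by auto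
  define u where "u = fst (T ! j)"
  have lu: "length u = ?n" using Tc[OF j(1)] by (auto simp: u_def G_carrier)
  define h where "h = amap ?n (1\<^sub>m ?n) u"
  have hiso: "h \<in> iso ?G ?G" unfolding h_def by (rule amap_iso[where B="1\<^sub>m ?n"]) (use lu in auto)
  have gen: "generate ?G (h ` set T) = carrier ?G" by (rule gen_iso[OF G_group G_group hiso sT gT])
  define bv where "bv k = fst (h (T ! idx j k))" for k
  define B :: "int mat" where "B = mat ?n ?n (\<lambda>(r,k). bv k ! r)"
  define lin where "lin c = map (\<lambda>r. \<Sum>k<?n. B $$ (r,k) * c ! k) [0..<?n]" for c
  define K where "K = {x \<in> carrier ?G. \<exists>c. length c = ?n \<and> fst x = lin c}"
  have lin_len: "length (lin c) = ?n" for c by (simp add: lin_def)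
  have lin_add: "lin (map2 (+) c d) = map2 (+) (lin c) (lin d)" if "length c = ?n" "length d = ?n" for c d
  proof (rule nth_equalityI)
    show "length (lin (map2 (+) c d)) = length (map2 (+) (lin c) (lin d))" by (simp add: lin_def)
    fix r assume "r < length (lin (map2 (+) c d))"
    then have r: "r < ?n" by (simp add: lin_def)
    have "lin (map2 (+) c d) ! r = (\<Sum>k<?n. B $$ (r,k) * c ! k + B $$ (r,k) * d ! k)"
      unfolding lin_def using r that by (simp add: ring_distribs)
    then show "lin (map2 (+) c d) ! r = map2 (+) (lin c) (lin d) ! r"
      using r by (simp add: lin_def sum.distrib)
  qed
  have lin_neg: "lin (map uminus c) = map uminus (lin c)" if "length c = ?n" for c
  proof (rule nth_equalityI)
    show "length (lin (map uminus c)) = length (map uminus (lin c))" by (simp add: lin_def)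
    fix r assume "r < length (lin (map uminus c))"
    then have r: "r < ?n" by (simp add: lin_def)
    have "lin (map uminus c) ! r = (\<Sum>k<?n. - (B $$ (r,k) * c ! k))"
      unfolding lin_def using r that by simp
    then show "lin (map uminus c) ! r = map uminus (lin c) ! r"
      using r by (simp add: lin_def sum_negf)
  qed
  have lin_zero: "lin (replicate ?n 0) = replicate ?n 0"
    by (auto simp: lin_def intro!: nth_equalityI)
  have sgK: "subgroup K ?G"
  proof (rule group.subgroupI[OF G_group])
    show "K \<subseteq> carrier ?G" by (auto simp: K_def)
    have "(replicate ?n 0, False) \<in> K" unfolding K_def using lin_zero
      by (simp add: G_carrier) (metis length_replicate)
    then show "K \<noteq> {}" by blast
  next
    fix a assume "a \<in> K"
    then obtain c e where a: "a = (lin c, e)" "length c = ?n" "a \<in> carrier ?G" unfolding K_def by (cases a) auto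
    show "inv\<^bsub>?G\<^esub> a \<in> K"
    proof (cases e)
      case True then show ?thesis using a by (auto simp: G_inv K_def G_carrier)
    next
      case False
      then have "inv\<^bsub>?G\<^esub> a = (lin (map uminus c), False)" using a lin_neg by (simp add: G_inv)
      moreover have "length (map uminus c) = ?n" using a by simp
      ultimately show ?thesis unfolding K_def by (auto simp: G_carrier lin_len intro!: exI[of _ "map uminus c"])
    qed
  next
    fix a b assume "a \<in> K" "b \<in> K"
    then obtain c e d f where a: "a = (lin c, e)" "length c = ?n" and b: "b = (lin d, f)" "length d = ?n"
      unfolding K_def by (cases a, cases b) auto
    define w where "w = map2 (+) c (if e then map uminus d else d)"
    have lw: "length w = ?n" using a b by (simp add: w_def)
    have eq: "a \<otimes>\<^bsub>?G\<^esub> b = (lin w, e \<noteq> f)"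
    proof (cases e)
      case True
      have "a \<otimes>\<^bsub>?G\<^esub> b = (map2 (+) (lin c) (map uminus (lin d)), e \<noteq> f)"
        using a b True by (simp add: G_mult)
      also have "\<dots> = (lin w, e \<noteq> f)"
        unfolding w_def using True lin_neg[OF b(2)] lin_add[OF a(2), of "map uminus d"] b(2) by simp
      finally show ?thesis .
    next
      case False
      have "a \<otimes>\<^bsub>?G\<^esub> b = (map2 (+) (lin c) (lin d), e \<noteq> f)"
        using a b False by (simp add: G_mult)
      also have "\<dots> = (lin w, e \<noteq> f)"
        unfolding w_def using False lin_add[OF a(2) b(2)] by simp
      finally show ?thesis .
    qed
    show "a \<otimes>\<^bsub>?G\<^esub> b \<in> K" unfolding K_def eq
      using lw by (auto simp: G_carrier lin_len)
  qed
  have hnth: "fst (h x) ! r = fst x ! r - (if snd x then u ! r else 0)" if "r < ?n" for x r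
    using that one_sum[OF that] by (simp add: h_def amap_nth)
  have lh: "length (fst (h x)) = ?n" for x by (simp add: h_def)
  have bvB: "bv k ! r = B $$ (r,k)" if "r < ?n" "k < ?n" for r k using that by (simp add: B_def)
  have linunit: "lin (unitl ?n k) = bv k" if "k < ?n" for k
  proof (rule nth_equalityI)
    show "length (lin (unitl ?n k)) = length (bv k)" by (simp add: lin_def bv_def h_def)
    fix r assume "r < length (lin (unitl ?n k))"
    then have r: "r < ?n" by (simp add: lin_def)
    then show "lin (unitl ?n k) ! r = bv k ! r"
      using unitl_sum[OF that, of "\<lambda>q. B $$ (r,q)"] bvB[OF r that] by (simp add: lin_def)
  qed
  have hT: "h ` set T \<subseteq> K"
  proof
    fix y assume "y \<in> h ` set T"
    then obtain i where i: "i < m" "y = h (T ! i)" using lT by (auto simp: in_set_conv_nth)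
    have yc: "y \<in> carrier ?G" using hiso Tc[OF i(1)] i(2) by (auto simp: Group.iso_iff hom_def)
    show "y \<in> K"
    proof (cases "i = j")
      case True
      have "fst y = replicate ?n 0" using i True Tj
        by (auto intro!: nth_equalityI simp: hnth lh u_def)
      then show ?thesis using yc lin_zero unfolding K_def by (auto intro!: exI[of _ "replicate ?n 0"])
    next
      case False
      define k where "k = pos j i"
      have k: "k < ?n" "idx j k = i" using False i j by (auto simp: k_def pos_def idx_def)
      have "fst y = lin (unitl ?n k)" using linunit[OF k(1)] k i by (simp add: bv_def)
      then show ?thesis using yc unfolding K_def by (auto intro!: exI[of _ "unitl ?n k"] simp: unitl_def)
    qed
  qed
  have carrK: "carrier ?G \<subseteq> K"
    using group.generate_subgroup_incl[OF G_group hT sgK] gen by simp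
  have "\<exists>c. length c = ?n \<and> unitl ?n k = lin c" if "k < ?n" for k
  proof -
    have "(unitl ?n k, False) \<in> carrier ?G" by (simp add: G_carrier unitl_def)
    then have "(unitl ?n k, False) \<in> K" using carrK by blast
    then show ?thesis unfolding K_def by simp
  qed
  then obtain cc where cc: "\<And>k. k < ?n \<Longrightarrow> length (cc k) = ?n \<and> unitl ?n k = lin (cc k)" by metis
  define C :: "int mat" where "C = mat ?n ?n (\<lambda>(r,k). cc k ! r)"
  have Bc: "B \<in> carrier_mat ?n ?n" and Cc: "C \<in> carrier_mat ?n ?n" by (auto simp: B_def C_def)
  have BC: "B * C = 1\<^sub>m ?n"
  proof (rule eq_matI)
    fix i k assume ik: "i < dim_row (1\<^sub>m ?n :: int mat)" "k < dim_col (1\<^sub>m ?n :: int mat)"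
    then have ik': "i < ?n" "k < ?n" by auto
    have "(B * C) $$ (i,k) = (\<Sum>l<?n. B $$ (i,l) * cc k ! l)"
      using ik' Bc Cc by (auto simp: index_mult_mat scalar_prod_def lessThan_atLeast0 C_def intro!: sum.cong)
    also have "\<dots> = lin (cc k) ! i" using ik' by (simp add: lin_def)
    also have "\<dots> = unitl ?n k ! i" using cc[OF ik'(2)] by simp
    also have "\<dots> = (1\<^sub>m ?n :: int mat) $$ (i,k)" using ik' by (simp add: unitl_def)
    finally show "(B * C) $$ (i,k) = (1\<^sub>m ?n :: int mat) $$ (i,k)" .
  qed (auto simp: B_def C_def)
  have CB: "C * B = 1\<^sub>m ?n" by (rule int_inv_comm[OF Bc Cc BC])
  have aiso: "amap ?n C u \<in> iso ?G ?G" by (rule amap_iso[OF Cc Bc CB BC lu])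
  have "map (amap ?n C u) T = S0 p"
  proof (rule nth_equalityI)
    show "length (map (amap ?n C u) T) = length (S0 p)" using lT lp by simp
    fix i assume "i < length (map (amap ?n C u) T)"
    then have i: "i < m" using lT by simp
    show "map (amap ?n C u) T ! i = S0 p ! i"
    proof (cases "i = j")
      case True
      then show ?thesis using i lT lp Tj j
        by (auto simp: S0_def amap_def u_def j_def p_def intro!: nth_equalityI)
    next
      case False
      define k where "k = pos j i"
      have k: "k < ?n" "idx j k = i" using False i j by (auto simp: k_def pos_def idx_def)
      have "fst (amap ?n C u (T ! i)) = unitl ?n k"
      proof (rule nth_equalityI)
        show "length (fst (amap ?n C u (T ! i))) = length (unitl ?n k)" by (simp add: unitl_def)
        fix r assume "r < length (fst (amap ?n C u (T ! i)))"
        then have r: "r < ?n" by simp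
        have "fst (amap ?n C u (T ! i)) ! r = (\<Sum>l<?n. C $$ (r,l) * (\<Sum>q<?n. B $$ (l,q) * unitl ?n k ! q))"
          unfolding amap_nth[OF r]
        proof (intro sum.cong refl arg_cong2[where f="(*)"])
          fix l assume "l \<in> {..<?n}"
          then have l: "l < ?n" by simp
          have "fst (T ! i) ! l - (if snd (T ! i) then u ! l else 0) = bv k ! l"
            using hnth[OF l] k by (simp add: bv_def)
          also have "\<dots> = (\<Sum>q<?n. B $$ (l,q) * unitl ?n k ! q)"
            using bvB[OF l k(1)] unitl_sum[OF k(1), of "\<lambda>q. B $$ (l,q)"] by simp
          finally show "fst (T ! i) ! l - (if snd (T ! i) then u ! l else 0) = (\<Sum>q<?n. B $$ (l,q) * unitl ?n k ! q)" .
        qed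
        also have "\<dots> = unitl ?n k ! r" by (rule matprod_apply[OF Cc Bc CB r])
        finally show "fst (amap ?n C u (T ! i)) ! r = unitl ?n k ! r" .
      qed
      moreover have "p ! i = snd (T ! i)" using i lT by (simp add: p_def)
      ultimately show ?thesis using i lT lp False k
        by (simp add: S0_def j_def[symmetric] k_def prod_eq_iff)
    qed
  qed
  then show ?thesis using aiso by (auto simp: p_def)
qed

lemma L1:
  assumes "marked_group m H S" "H \<cong> semidir_G m"
  shows "\<exists>\<psi> \<in> iso H (semidir_G m). map \<psi> S = S0 (map (invol H) S)"
proof -
  let ?G = "semidir_G m"
  obtain \<theta> where th: "\<theta> \<in> iso H ?G" using assms(2) by (auto simp: is_iso_def)
  have gH: "group H" and lS: "length S = m" and sS: "set S \<subseteq> carrier H" and gS: "generate H (set S) = carrier H"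
    using assms(1) by (auto simp: marked_group_def)
  have hom: "\<theta> \<in> hom H ?G" using th by (simp add: Group.iso_iff)
  have mg: "marked_group m ?G (map \<theta> S)"
    unfolding marked_group_def using G_group lS sS hom gen_iso[OF gH G_group th sS gS]
    by (auto simp: hom_def)
  obtain \<alpha> where al: "\<alpha> \<in> iso ?G ?G" "map \<alpha> (map \<theta> S) = S0 (map snd (map \<theta> S))"
    using L2[OF mg] by blast
  have "map snd (map \<theta> S) = map (invol H) S"
  proof -
    have "snd (\<theta> x) = invol H x" if "x \<in> set S" for x
    proof -
      have xc: "x \<in> carrier H" using that sS by auto
      then have "\<theta> x \<in> carrier ?G" using hom by (auto simp: hom_def)
      then show ?thesis using G_invol invol_iso[OF gH G_group th xc] by blast
    qed
    then show ?thesis by simp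
  qed
  note eqs = this
  have "map (\<alpha> \<circ> \<theta>) S = map \<alpha> (map \<theta> S)" by simp
  also have "\<dots> = S0 (map snd (map \<theta> S))" by (rule al(2))
  also have "\<dots> = S0 (map (invol H) S)" by (simp only: eqs)
  finally have "map (\<alpha> \<circ> \<theta>) S = S0 (map (invol H) S)" .
  moreover have "\<alpha> \<circ> \<theta> \<in> iso H ?G" by (rule iso_set_trans[OF th al(1)])
  ultimately show ?thesis by blast
qed

lemma R1:
  assumes "marked_group m H S" "marked_group m H' S'" "\<phi> \<in> iso H H'" "map \<phi> S = S'"
  shows "map (invol H') S' = map (invol H) S"
proof -
  have gH: "group H" "group H'" and sS: "set S \<subseteq> carrier H" using assms by (auto simp: marked_group_def)
  show ?thesis unfolding assms(4)[symmetric] using invol_iso[OF gH assms(3)] sS by auto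
qed

lemma R2:
  assumes "marked_group m H S" "H \<cong> semidir_G m" "marked_group m H' S'" "H' \<cong> semidir_G m"
    and "map (invol H) S = map (invol H') S'"
  shows "((H, S), (H', S')) \<in> marked_equiv"
proof -
  obtain \<psi> where p: "\<psi> \<in> iso H (semidir_G m)" "map \<psi> S = S0 (map (invol H) S)" using L1[OF assms(1,2)] by blast
  obtain \<psi>' where p': "\<psi>' \<in> iso H' (semidir_G m)" "map \<psi>' S' = S0 (map (invol H') S')" using L1[OF assms(3,4)] by blast
  have gH': "group H'" and sS': "set S' \<subseteq> carrier H'" using assms(3) by (auto simp: marked_group_def)
  have inv: "inv_into (carrier H') \<psi>' \<in> iso (semidir_G m) H'" by (rule group.iso_set_sym[OF gH' p'(1)])
  have inj: "inj_on \<psi>' (carrier H')" using p'(1) by (simp add: Group.iso_iff)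
  have "map (inv_into (carrier H') \<psi>' \<circ> \<psi>) S = map (inv_into (carrier H') \<psi>') (map \<psi> S)" by simp
  also have "map \<psi> S = map \<psi>' S'" unfolding p(2) p'(2) assms(5) ..
  also have "map (inv_into (carrier H') \<psi>') (map \<psi>' S') = S'" using inj sS' by (auto intro!: map_idI inv_into_f_f)
  finally show ?thesis using iso_set_trans[OF p(1) inv] unfolding marked_equiv_def by blast
qed

lemma R3:
  assumes "marked_group m H S" "H \<cong> semidir_G m"
  shows "length (map (invol H) S) = m \<and> True \<in> set (map (invol H) S)"
proof -
  obtain \<psi> where p: "\<psi> \<in> iso H (semidir_G m)" "map \<psi> S = S0 (map (invol H) S)" using L1[OF assms] by blast
  have gH: "group H" and lS: "length S = m" and sS: "set S \<subseteq> carrier H" and gS: "generate H (set S) = carrier H"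
    using assms(1) by (auto simp: marked_group_def)
  have "generate (semidir_G m) (\<psi> ` set S) = carrier (semidir_G m)" by (rule gen_iso[OF gH G_group p(1) sS gS])
  moreover have "\<psi> ` set S = set (S0 (map (invol H) S))" using arg_cong[OF p(2), of set] by simp
  ultimately have "\<exists>x\<in>set (S0 (map (invol H) S)). snd x"
    using G_gen_has_true[OF S0_carrier] lS by (metis length_map)
  then have "True \<in> set (map snd (S0 (map (invol H) S)))" by force
  then show ?thesis using lS by (simp only: S0_snd) simp
qed

lemma R4:
  assumes inf: "infinite (UNIV :: 'a set)" and p: "length p = m" "True \<in> set p"
  shows "\<exists>(H :: 'a monoid) S. marked_group m H S \<and> H \<cong> semidir_G m \<and> map (invol H) S = p"
proof -
  let ?G = "semidir_G m"
  obtain g :: "nat \<Rightarrow> 'a" where g: "inj g" using infinite_countable_subset[OF inf] by blast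
  define f :: "int list \<times> bool \<Rightarrow> 'a" where "f = g \<circ> to_nat"
  have injf: "inj f" unfolding f_def using g by (simp add: inj_compose)
  define G' :: "'a monoid" where "G' = \<lparr>carrier = f ` carrier ?G, monoid.mult = (\<lambda>a b. f (inv_into UNIV f a \<otimes>\<^bsub>?G\<^esub> inv_into UNIV f b)), one = f \<one>\<^bsub>?G\<^esub>\<rparr>"
  have hom: "f \<in> hom ?G G'"
    by (rule homI) (auto simp: G'_def inv_f_f[OF injf])
  have "group (G'\<lparr>carrier := f ` carrier ?G, one := f \<one>\<^bsub>?G\<^esub>\<rparr>)"
    by (rule group.hom_imp_img_group[OF G_group hom])
  moreover have "G'\<lparr>carrier := f ` carrier ?G, one := f \<one>\<^bsub>?G\<^esub>\<rparr> = G'" by (simp add: G'_def)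
  ultimately have gG': "group G'" by simp
  have iso: "f \<in> iso ?G G'"
    by (rule isoI[OF hom]) (simp add: G'_def inj_on_imp_bij_betw[OF inj_on_subset[OF injf]])
  have isoGG: "G' \<cong> ?G" by (rule group.iso_sym[OF G_group is_isoI[OF iso]])
  have sc: "set (S0 p) \<subseteq> carrier ?G" using S0_carrier[OF p(1)] .
  have mg: "marked_group m G' (map f (S0 p))"
    unfolding marked_group_def using gG' p(1) gen_iso[OF G_group gG' iso sc S0_gen[OF p]] sc
    by (auto simp: G'_def)
  have inv1: "invol G' (f x) = snd x" if "x \<in> set (S0 p)" for x
  proof -
    have xc: "x \<in> carrier ?G" using that sc by blast
    show ?thesis using invol_iso[OF G_group gG' iso xc] G_invol[OF xc] by simp
  qed
  have "map (invol G') (map f (S0 p)) = map (\<lambda>x. invol G' (f x)) (S0 p)" by simp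
  also have "\<dots> = map snd (S0 p)" by (rule map_cong[OF refl]) (rule inv1)
  also have "\<dots> = p" by (rule S0_snd)
  finally have "map (invol G') (map f (S0 p)) = p" .
  then show ?thesis using mg isoGG by blast
qed

lemma equiv_refl: "((H, S), (H, S)) \<in> marked_equiv"
  unfolding marked_equiv_def using iso_set_refl by fastforce

lemma equiv_trans:
  assumes "(x, y) \<in> marked_equiv" "(y, z) \<in> marked_equiv" shows "(x, z) \<in> marked_equiv"
proof -
  obtain H S H' S' H'' S'' where xyz: "x = (H,S)" "y = (H',S')" "z = (H'',S'')" by (cases x, cases y, cases z)
  obtain \<phi> \<phi>' where "\<phi> \<in> iso H H'" "map \<phi> S = S'" "\<phi>' \<in> iso H' H''" "map \<phi>' S' = S''"
    using assms unfolding xyz marked_equiv_def by auto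
  then have "\<phi>' \<circ> \<phi> \<in> iso H H''" "map (\<phi>' \<circ> \<phi>) S = S''" using iso_set_trans by auto
  then show ?thesis unfolding xyz marked_equiv_def by blast
qed

lemma card_Q: "card {p :: bool list. length p = m \<and> True \<in> set p} = 2 ^ m - 1"
proof -
  have "{p :: bool list. length p = m \<and> True \<in> set p} = {p. set p \<subseteq> UNIV \<and> length p = m} - {replicate m False}"
  proof -
    have h: "p = replicate m False" if "length p = m" "True \<notin> set p" for p :: "bool list"
      using that by (metis (full_types) replicate_eqI)
    show ?thesis
    proof (intro equalityI subsetI)
      fix p :: "bool list"
      assume "p \<in> {p. length p = m \<and> True \<in> set p}"
      then have "length p = m" "True \<in> set p" by auto
      moreover have "p \<noteq> replicate m False" using \<open>True \<in> set p\<close> by (metis in_set_replicate)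
      ultimately show "p \<in> {p. set p \<subseteq> UNIV \<and> length p = m} - {replicate m False}" by simp
    next
      fix p :: "bool list"
      assume a: "p \<in> {p. set p \<subseteq> UNIV \<and> length p = m} - {replicate m False}"
      then have "length p = m" "p \<noteq> replicate m False" by auto
      then have "True \<in> set p" using h by blast
      then show "p \<in> {p. length p = m \<and> True \<in> set p}" using \<open>length p = m\<close> by simp
    qed
  qed
  moreover have "card {p :: bool list. set p \<subseteq> UNIV \<and> length p = m} = 2 ^ m"
    using card_lists_length_eq[of "UNIV :: bool set" m] by simp
  moreover have "finite {p :: bool list. set p \<subseteq> UNIV \<and> length p = m}"
    using finite_lists_length_eq[of "UNIV :: bool set" m] by simp
  ultimately show ?thesis by (simp add: card_Diff_singleton)
qed

theorem proposition5p4: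
  fixes m :: nat
  assumes "m \<ge> 2"
    and "infinite (UNIV :: 'a set)"
  shows "card ((marked_groups_iso_to m (semidir_G m) :: ('a monoid \<times> 'a list) set) // marked_equiv)
           = 2 ^ m - 1"
proof -
  define A where "A = (marked_groups_iso_to m (semidir_G m) :: ('a monoid \<times> 'a list) set)"
  define r :: "(('a monoid \<times> 'a list) \<times> ('a monoid \<times> 'a list)) set" where "r = marked_equiv"
  define pat :: "'a monoid \<times> 'a list \<Rightarrow> bool list" where "pat x = map (invol (fst x)) (snd x)" for x
  define Q where "Q = {p :: bool list. length p = m \<and> True \<in> set p}"
  have memA: "x \<in> A \<longleftrightarrow> marked_group m (fst x) (snd x) \<and> fst x \<cong> semidir_G m" for x
    by (cases x) (simp add: A_def marked_groups_iso_to_def)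
  have r1: "pat x = pat y" if a: "x \<in> A" "y \<in> A" "(x, y) \<in> r" for x y
  proof -
    obtain H S H' S' where xy: "x = (H, S)" "y = (H', S')" by (cases x, cases y)
    obtain \<phi> where ph: "\<phi> \<in> iso H H'" "map \<phi> S = S'" using a(3) unfolding xy r_def marked_equiv_def by auto
    have "marked_group m H S" "marked_group m H' S'" using a(1,2) unfolding memA xy by auto
    from R1[OF this ph] show ?thesis unfolding xy pat_def by simp
  qed
  have r2: "(x, y) \<in> r" if a: "x \<in> A" "y \<in> A" "pat x = pat y" for x y
  proof -
    obtain H S H' S' where xy: "x = (H, S)" "y = (H', S')" by (cases x, cases y)
    have "marked_group m H S" "H \<cong> semidir_G m" "marked_group m H' S'" "H' \<cong> semidir_G m"
      using a(1,2) unfolding memA xy by auto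
    from R2[OF this] a(3) show ?thesis unfolding xy pat_def r_def by simp
  qed
  have r3: "pat x \<in> Q" if a: "x \<in> A" for x
  proof -
    obtain H S where xy: "x = (H, S)" by (cases x)
    have "marked_group m H S" "H \<cong> semidir_G m" using a unfolding memA xy by auto
    from R3[OF this] show ?thesis unfolding xy pat_def Q_def by simp
  qed
  have r4: "\<exists>x\<in>A. pat x = p" if "p \<in> Q" for p
  proof -
    have pp: "length p = m" "True \<in> set p" using that unfolding Q_def by auto
    obtain H :: "'a monoid" and S where HS: "marked_group m H S" "H \<cong> semidir_G m" "map (invol H) S = p"
      using R4[OF assms(2) pp] by blast
    have "(H, S) \<in> A" unfolding memA using HS by simp
    moreover have "pat (H, S) = p" unfolding pat_def using HS by simp
    ultimately show ?thesis by blast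
  qed
  have cls: "r `` {x} = r `` {y}" if "x \<in> A" "y \<in> A" "pat x = pat y" for x y
    using r2[OF that] r2[OF that(2,1) that(3)[symmetric]] equiv_trans unfolding r_def by blast
  define rep where "rep p = (SOME x. x \<in> A \<and> pat x = p)" for p
  have rep: "rep p \<in> A \<and> pat (rep p) = p" if pQ: "p \<in> Q" for p
  proof -
    obtain x where "x \<in> A \<and> pat x = p" using r4[OF pQ] by blast
    then show ?thesis unfolding rep_def by (rule someI[where P="\<lambda>x. x \<in> A \<and> pat x = p"])
  qed
  have bij: "bij_betw (\<lambda>p. r `` {rep p}) Q (A // r)"
  proof (rule bij_betwI')
    fix p q assume pq: "p \<in> Q" "q \<in> Q"
    show "(r `` {rep p} = r `` {rep q}) = (p = q)"
    proof
      assume eq: "r `` {rep p} = r `` {rep q}"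
      have "rep q \<in> r `` {rep q}" unfolding r_def using equiv_refl by (cases "rep q") auto
      then have "(rep p, rep q) \<in> r" using eq by blast
      then have "pat (rep p) = pat (rep q)" using r1 rep pq by blast
      then show "p = q" using rep pq by simp
    qed simp
  next
    fix p assume "p \<in> Q" then show "r `` {rep p} \<in> A // r" using rep by (auto intro: quotientI)
  next
    fix C assume "C \<in> A // r"
    then obtain x where x: "x \<in> A" "C = r `` {x}" by (auto elim: quotientE)
    have "pat x \<in> Q" using r3 x by auto
    moreover have "C = r `` {rep (pat x)}"
    proof -
      have "rep (pat x) \<in> A" "pat x = pat (rep (pat x))" using rep[OF \<open>pat x \<in> Q\<close>] by auto
      from cls[OF x(1) this] x(2) show ?thesis by simp
    qed
    ultimately show "\<exists>p\<in>Q. C = r `` {rep p}" by blast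
  qed
  have "card (A // r) = card Q" using bij_betw_same_card[OF bij] by simp
  then show ?thesis using card_Q unfolding A_def r_def Q_def by simp
qed

end
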